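(* Let $\mathcal A_1,\dots,\mathcal A_d\subset\mathbb Z^d$ be finite sets such that the Cayley configuration $C(\mathcal A_1,\dots,\mathcal A_d)$ contains a $(2d-1)$-simplex, let $\mathcal A=\bigcup_i\mathcal A_i=\{a_1,\dots,a_n\}$ and $C=(c_{ij})\in\mathbb R^{d\times n}$ with $c_{ij}=0$ whenever $a_j\notin\mathcal A_i$. Assume there exist $p$ mixed $(2d-1)$-simplices $\Delta_1,\dots,\Delta_p$ of $C(\mathcal A_1,\dots,\mathcal A_d)$ which are part of a (common) regular subdivision (for instance, when $p=2$ and the two simplices share a facet) and are positively decorated by $C$. Set $N=|\mathcal A_1|+\dots+|\mathcal A_d|$ and assume that the cone $\mathcal C_{\Delta_1,\dots,\Delta_p}\subset\mathbb R^N$ of all height vectors inducing regular subdivisions of $C(\mathcal A_1,\dots,\mathcal A_d)$ containing $\Delta_1,\dots,\Delta_p$ is \[ \mathcal C_{\Delta_1,\dots,\Delta_p}=\{h\in\mathbb R^N:\ \langle m_r,h\rangle>0,\ r=1,\dots,\ell\},\qquad m_r\in\mathbb R^N. \] Then for any $\varepsilon\in(0,1)^\ell$ there exists $t_0(\varepsilon)>0$ such that for any $\gamma$ in the set \[ U=\bigcup_{\varepsilon\in(0,1)^\ell}\{\gamma=(\gamma^1,\dots,\gamma^d)\in\mathbb R^N_{>0}:\ \gamma^{m_r}\le t_0(\varepsilon)^{\varepsilon_r},\ r=1,\dots,\ell\}, \] the system \[ \sum_{a_j\in\mathcal A_i}c_{ij}\,\gamma^i_j\,x^{a_j}=0,\qquad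 i=1,\dots,d, \] has at least $p$ nondegenerate solutions in $\mathbb R^d_{>0}$.
   Context: $e_1,\dots,e_d$ is the canonical basis of $\mathbb Z^d$; $C(\mathcal A_1,\dots,\mathcal A_d)=\bigcup_i(\mathcal A_i\times\{e_i\})\subset\mathbb Z^{2d}$, a set of $N$ points; height vectors in $\mathbb R^N$ have one coordinate for each point $(a_j,e_i)$, and $\gamma=(\gamma^1,\dots,\gamma^d)\in\mathbb R^N_{>0}$ is indexed the same way, where $\gamma^i$ has coordinates $\gamma^i_j$ for $a_j\in\mathcal A_i$; $\gamma^{m}$ denotes the product of the coordinates of $\gamma$ raised to the corresponding coordinates of $m$. A $(2d-1)$-simplex is a set of $2d$ affinely independent points of the configuration; it is mixed if it consists of exactly two points $(a_{j_1},e_i),(a_{j_2},e_i)$ for each $i$, and positively decorated by $C$ if $c_{i,j_1}c_{i,j_2}<0$ for each $i$. Regular subdivisions of a point configuration $P\subset\mathbb R^{2d}$: for $h:P\to\mathbb R$, lift $q\mapsto(q,h(q))$; lower faces of the convex hull of the lifted points are those with an inner normal of positive last coordinate; each lower face $F$ gives the cell $\{q:(q,h(q))\in F\}$; the cells form the regular subdivision induced by $h$; a simplex is part of it if it is a cell. Two simplices share a facet if the intersection of their convex hulls is a facet of both. A solution is nondegenerate if the Jacobian determinant of the system does not vanish at it. *)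

theory Defs
  imports "HOL-Analysis.Analysis"
begin

text \<open>Points of the Cayley configuration C(A_1,...,A_d) are represented as pairs (a,i)
  with a in A_i; they are embedded into R^d x R^d as (a, e_i).\<close>

definition cayley :: "('d::finite \<Rightarrow> (int^'d) set) \<Rightarrow> ((int^'d) \<times> 'd) set" where
  "cayley A = {(a, i). a \<in> A i}"

definition cay_emb :: "(int^'d::finite) \<times> 'd \<Rightarrow> (real^'d) \<times> (real^'d)" where
  "cay_emb q = ((\<chi> k. real_of_int (fst q $ k)), axis (snd q) 1)"

text \<open>A (2d-1)-simplex of the configuration: 2d affinely independent points.\<close>
definition cay_simplex :: "('d::finite \<Rightarrow> (int^'d) set) \<Rightarrow> ((int^'d) \<times> 'd) set \<Rightarrow> bool" where
  "cay_simplex A S \<longleftrightarrow> S \<subseteq> cayley A \<and> card S = 2 * CARD('d)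
      \<and> \<not> affine_dependent (cay_emb ` S)"

definition mixed_simplex :: "('d::finite \<Rightarrow> (int^'d) set) \<Rightarrow> ((int^'d) \<times> 'd) set \<Rightarrow> bool" where
  "mixed_simplex A S \<longleftrightarrow> cay_simplex A S \<and> (\<forall>i. card {a. (a, i) \<in> S} = 2)"

definition pos_decorated :: "((int^'d::finite) \<times> 'd \<Rightarrow> real) \<Rightarrow> ((int^'d) \<times> 'd) set \<Rightarrow> bool" where
  "pos_decorated c S \<longleftrightarrow>
     (\<forall>i a1 a2. (a1, i) \<in> S \<and> (a2, i) \<in> S \<and> a1 \<noteq> a2 \<longrightarrow> c (a1, i) * c (a2, i) < 0)"

text \<open>Lower faces of the convex hull of a lifted point set: faces with an inner normal
  (u,c) whose last coordinate c is positive, i.e. the minimisers of that functional.\<close>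
definition lower_face :: "('p::real_inner \<times> real) set \<Rightarrow> ('p \<times> real) set \<Rightarrow> bool" where
  "lower_face L F \<longleftrightarrow> (\<exists>u c. c > 0 \<and>
     F = {z \<in> convex hull L. \<forall>y \<in> convex hull L. inner (u, c) z \<le> inner (u, c) y})"

text \<open>Q is a cell of the regular subdivision of P induced by the heights h.\<close>
definition regular_cell :: "('q \<Rightarrow> 'p::real_inner) \<Rightarrow> 'q set \<Rightarrow> ('q \<Rightarrow> real) \<Rightarrow> 'q set \<Rightarrow> bool" where
  "regular_cell emb P h Q \<longleftrightarrow>
     (\<exists>F. lower_face ((\<lambda>q. (emb q, h q)) ` P) F \<and> Q = {q \<in> P. (emb q, h q) \<in> F})"

definition monom :: "real^'d::finite \<Rightarrow> int^'d \<Rightarrow> real" where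
  "monom x a = (\<Prod>k\<in>UNIV. (x $ k) powr real_of_int (a $ k))"

text \<open>The system  sum_{a in A_i} c_{i,a} gamma^i_a x^a = 0,  i = 1..d.\<close>
definition cay_system :: "('d::finite \<Rightarrow> (int^'d) set) \<Rightarrow> ((int^'d) \<times> 'd \<Rightarrow> real)
    \<Rightarrow> ((int^'d) \<times> 'd \<Rightarrow> real) \<Rightarrow> real^'d \<Rightarrow> real^'d" where
  "cay_system A c \<gamma> x = (\<chi> i. \<Sum>a\<in>A i. c (a, i) * \<gamma> (a, i) * monom x a)"

definition nondegenerate :: "(real^'n::finite \<Rightarrow> real^'n) \<Rightarrow> real^'n \<Rightarrow> bool" where
  "nondegenerate F x \<longleftrightarrow> (\<exists>F'. (F has_derivative F') (at x) \<and> det (matrix F') \<noteq> 0)"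

end

theory Submission
  imports Defs
begin

definition ra :: "int^'d::finite \<Rightarrow> real^'d" where
  "ra a = (\<chi> k. real_of_int (a $ k))"

lemma cay_emb_ra: "cay_emb (a, i) = (ra a, axis i 1)"
  by (simp add: cay_emb_def ra_def)

lemma finite_cayley: "(\<And>i. finite (A i)) \<Longrightarrow> finite (cayley (A::'d::finite \<Rightarrow> _))"
proof -
  assume f: "\<And>i. finite (A i)"
  have "cayley A = (\<Union>i. (\<lambda>a. (a, i)) ` A i)" by (auto simp: cayley_def)
  then show ?thesis using f by simp
qed

lemma regcell_affine:
  fixes A :: "'d::finite \<Rightarrow> (int^'d) set"
  assumes rc: "regular_cell cay_emb (cayley A) h S" and ne: "S \<noteq> {}"
  shows "S \<subseteq> cayley A \<and> (\<exists>w lam. \<forall>a i. (a, i) \<in> cayley A \<longrightarrow>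
           ra a \<bullet> w + lam i \<le> h (a, i) \<and> (ra a \<bullet> w + lam i = h (a, i) \<longleftrightarrow> (a, i) \<in> S))"
proof -
  define P where "P = cayley A"
  define lift where "lift = (\<lambda>q. (cay_emb q, h q))"
  obtain F where lf: "lower_face (lift ` P) F" and SF: "S = {q \<in> P. lift q \<in> F}"
    using rc unfolding regular_cell_def P_def lift_def by blast
  obtain u cc where cc: "cc > 0" and
    F: "F = {z \<in> convex hull (lift ` P). \<forall>y \<in> convex hull (lift ` P). inner (u, cc) z \<le> inner (u, cc) y}"
    using lf unfolding lower_face_def by blast
  obtain u1 u2 where u: "u = (u1, u2)" by (cases u)
  define psi where "psi = (\<lambda>z. inner (u, cc) z)"
  obtain q0 where q0: "q0 \<in> S" using ne by blast
  have q0P: "q0 \<in> P" and q0F: "lift q0 \<in> F" using q0 SF by auto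
  define mu where "mu = psi (lift q0)"
  have hullP: "lift q \<in> convex hull (lift ` P)" if "q \<in> P" for q
    using that by (simp add: hull_inc)
  have ge: "mu \<le> psi (lift q)" if "q \<in> P" for q
    using q0F hullP[OF that] unfolding F mu_def psi_def by auto
  have eqS: "psi (lift q) = mu \<longleftrightarrow> q \<in> S" if "q \<in> P" for q
  proof
    assume "psi (lift q) = mu"
    then have "lift q \<in> F" using q0F hullP[OF that] unfolding F mu_def psi_def by auto
    then show "q \<in> S" using SF that by auto
  next
    assume "q \<in> S"
    then have "lift q \<in> F" using SF by auto
    then have "psi (lift q) \<le> mu" using hullP[OF q0P] unfolding F mu_def psi_def by auto
    then show "psi (lift q) = mu" using ge[OF that] by linarith
  qed
  define w where "w = (- (1/cc)) *\<^sub>R u1"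
  define lam where "lam = (\<lambda>i. (mu - u2 $ i) / cc)"
  have psi_eq: "psi (lift (a, i)) = u1 \<bullet> ra a + u2 $ i + cc * h (a, i)" for a i
    by (simp add: psi_def lift_def u cay_emb_ra inner_axis)
  have key: "h (a, i) - (ra a \<bullet> w + lam i) = (psi (lift (a, i)) - mu) / cc" for a i
    using cc by (simp add: psi_eq w_def lam_def field_simps inner_commute)
  have "\<forall>a i. (a, i) \<in> cayley A \<longrightarrow>
           ra a \<bullet> w + lam i \<le> h (a, i) \<and> (ra a \<bullet> w + lam i = h (a, i) \<longleftrightarrow> (a, i) \<in> S)"
  proof (intro allI impI)
    fix a i assume ai: "(a, i) \<in> cayley A"
    then have ai': "(a, i) \<in> P" by (simp add: P_def)
    have k: "h (a, i) - (ra a \<bullet> w + lam i) = (psi (lift (a, i)) - mu) / cc" by (rule key)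
    have "0 \<le> (psi (lift (a, i)) - mu) / cc" using ge[OF ai'] cc by simp
    moreover have "(psi (lift (a, i)) - mu) / cc = 0 \<longleftrightarrow> (a, i) \<in> S"
      using eqS[OF ai'] cc by auto
    ultimately show "ra a \<bullet> w + lam i \<le> h (a, i) \<and> (ra a \<bullet> w + lam i = h (a, i) \<longleftrightarrow> (a, i) \<in> S)"
      using k by auto
  qed
  moreover have "S \<subseteq> cayley A" using SF P_def by auto
  ultimately show ?thesis by blast
qed

lemma ra_inj: "ra a = ra b \<longleftrightarrow> a = b"
  by (auto simp: ra_def vec_eq_iff)

lemma emb_eq: "cay_emb (a, i) = cay_emb (b, j) \<longleftrightarrow> a = b \<and> i = j"
  by (auto simp: cay_emb_ra ra_inj axis_eq_axis)

lemma mixed_inv: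
  fixes A :: "'d::finite \<Rightarrow> (int^'d) set"
  assumes cs: "cay_simplex A S"
    and memS: "\<And>a i. (a, i) \<in> S \<longleftrightarrow> a = a1 i \<or> a = a2 i"
    and ne: "\<And>i. a1 i \<noteq> a2 i"
  shows "invertible (\<chi> i. ra (a2 i) - ra (a1 i))"
proof -
  define Bm :: "real^'d^'d" where "Bm = (\<chi> i. ra (a2 i) - ra (a1 i))"
  define E where "E = cay_emb ` S"
  define e1 where "e1 = (\<lambda>i. cay_emb (a1 i, i))"
  define e2 where "e2 = (\<lambda>i. cay_emb (a2 i, i))"
  have "card S > 0" using cs unfolding cay_simplex_def by simp
  then have finS: "finite S" using card_gt_0_iff by blast
  have finE: "finite E" using finS E_def by simp
  have indep: "\<not> affine_dependent E" using cs unfolding cay_simplex_def E_def by simp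
  have e1E: "e1 i \<in> E" for i using memS[of "a1 i" i] by (simp add: e1_def E_def)
  have e2E: "e2 i \<in> E" for i using memS[of "a2 i" i] by (simp add: e2_def E_def)
  have ker: "\<mu> = 0" if tz: "transpose Bm *v \<mu> = 0" for \<mu>
  proof (rule ccontr)
    assume "\<mu> \<noteq> 0"
    then obtain j where j: "\<mu> $ j \<noteq> 0" by (auto simp: vec_eq_iff)
    define U where "U = (\<lambda>p. \<Sum>i\<in>UNIV. (if p = e2 i then \<mu> $ i else 0) + (if p = e1 i then - \<mu> $ i else 0))"
    have s1: "sum U E = 0"
    proof -
      have "sum U E = (\<Sum>i\<in>UNIV. \<Sum>p\<in>E. (if p = e2 i then \<mu> $ i else 0) + (if p = e1 i then - \<mu> $ i else 0))"
        unfolding U_def by (rule sum.swap)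
      also have "\<dots> = (\<Sum>i\<in>UNIV. \<mu> $ i + (- \<mu> $ i))"
        by (simp add: sum.distrib finE e1E e2E)
      finally show ?thesis by simp
    qed
    have s2: "(\<Sum>p\<in>E. U p *\<^sub>R p) = 0"
    proof -
      have "(\<Sum>p\<in>E. U p *\<^sub>R p) = (\<Sum>i\<in>UNIV. \<Sum>p\<in>E. ((if p = e2 i then \<mu> $ i else 0) + (if p = e1 i then - \<mu> $ i else 0)) *\<^sub>R p)"
        unfolding U_def scaleR_sum_left by (rule sum.swap)
      also have "\<dots> = (\<Sum>i\<in>UNIV. \<mu> $ i *\<^sub>R e2 i - \<mu> $ i *\<^sub>R e1 i)"
      proof (rule sum.cong[OF refl])
        fix i
        have a: "((if p = e2 i then \<mu> $ i else 0) + (if p = e1 i then - \<mu> $ i else 0)) *\<^sub>R p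
           = (if p = e2 i then \<mu> $ i *\<^sub>R e2 i else 0) + (if p = e1 i then - \<mu> $ i *\<^sub>R e1 i else 0)" for p
          by (simp add: scaleR_add_left)
        show "(\<Sum>p\<in>E. ((if p = e2 i then \<mu> $ i else 0) + (if p = e1 i then - \<mu> $ i else 0)) *\<^sub>R p)
            = \<mu> $ i *\<^sub>R e2 i - \<mu> $ i *\<^sub>R e1 i"
          unfolding a by (simp add: sum.distrib finE e1E e2E)
      qed
      also have "\<dots> = (\<Sum>i\<in>UNIV. (\<mu> $ i *\<^sub>R (ra (a2 i) - ra (a1 i)), 0))"
        by (simp add: e1_def e2_def cay_emb_ra scaleR_diff_right)
      also have "\<dots> = ((\<Sum>i\<in>UNIV. \<mu> $ i *\<^sub>R (ra (a2 i) - ra (a1 i))), 0)"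
        by (simp add: sum_prod)
      also have "(\<Sum>i\<in>UNIV. \<mu> $ i *\<^sub>R (ra (a2 i) - ra (a1 i))) = transpose Bm *v \<mu>"
        by (simp add: vec_eq_iff matrix_vector_mult_def transpose_def Bm_def sum_component mult.commute)
      finally show ?thesis using tz by (simp add: zero_prod_def)
    qed
    have s3: "U (e2 j) \<noteq> 0"
    proof -
      have "U (e2 j) = (\<Sum>i\<in>UNIV. (if i = j then \<mu> $ i else 0))"
        unfolding U_def by (rule sum.cong) (use ne in \<open>auto simp: e1_def e2_def emb_eq dest: sym\<close>)
      then show ?thesis using j by simp
    qed
    have "affine_dependent E"
      unfolding affine_dependent_explicit_finite[OF finE]
      using s1 s2 s3 e2E by blast
    then show False using indep by simp
  qed
  have "\<exists>B. B ** transpose Bm = mat 1"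
    using ker matrix_left_invertible_ker by blast
  then obtain B where "Bm ** B = mat 1" using left_invertible_transpose by blast
  then show ?thesis unfolding Bm_def[symmetric] invertible_def
    using matrix_left_right_inverse by blast
qed

lemma monom_exp: "monom (\<chi> j. exp (y $ j)) a = exp (ra a \<bullet> y)"
  by (simp add: monom_def powr_def ra_def inner_vec_def exp_sum mult.commute)

lemma monom_pos: "(\<And>k. x $ k > 0) \<Longrightarrow> monom x a > 0"
  unfolding monom_def by (rule prod_pos) (metis powr_gt_zero less_irrefl)

lemma has_derivative_monom:
  fixes x :: "real^'d::finite"
  assumes pos: "\<And>k. x $ k > 0"
  shows "((\<lambda>x. monom x a) has_derivative
           (\<lambda>h. monom x a * (\<Sum>j\<in>UNIV. real_of_int (a $ j) * h $ j / x $ j))) (at x)"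
proof -
  have d: "((\<lambda>x. x $ k powr real_of_int (a $ k)) has_derivative
          (\<lambda>h. x $ k powr real_of_int (a $ k) * (0 * ln (x $ k) + h $ k * real_of_int (a $ k) / x $ k))) (at x)" for k
    by (rule has_derivative_powr[OF bounded_linear.has_derivative[OF bounded_linear_vec_nth] has_derivative_const])
       (use pos in auto)
  have "((\<lambda>x. monom x a) has_derivative
        (\<lambda>h. \<Sum>k\<in>UNIV. (x $ k powr real_of_int (a $ k) * (0 * ln (x $ k) + h $ k * real_of_int (a $ k) / x $ k))
              * (\<Prod>j\<in>UNIV - {k}. x $ j powr real_of_int (a $ j)))) (at x)"
    unfolding monom_def[abs_def] by (rule has_derivative_prod) (rule d)
  moreover have "(\<lambda>h. \<Sum>k\<in>UNIV. (x $ k powr real_of_int (a $ k) * (0 * ln (x $ k) + h $ k * real_of_int (a $ k) / x $ k))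
              * (\<Prod>j\<in>UNIV - {k}. x $ j powr real_of_int (a $ j)))
        = (\<lambda>h. monom x a * (\<Sum>j\<in>UNIV. real_of_int (a $ j) * h $ j / x $ j))"
  proof
    fix h
    have eqk: "(x $ k powr real_of_int (a $ k) * (0 * ln (x $ k) + h $ k * real_of_int (a $ k) / x $ k))
              * (\<Prod>j\<in>UNIV - {k}. x $ j powr real_of_int (a $ j))
         = monom x a * (real_of_int (a $ k) * h $ k / x $ k)" for k
    proof -
      have "monom x a = x $ k powr real_of_int (a $ k) * (\<Prod>j\<in>UNIV - {k}. x $ j powr real_of_int (a $ j))"
        unfolding monom_def by (simp add: prod.remove)
      then show ?thesis by simp
    qed
    then show "(\<Sum>k\<in>UNIV. (x $ k powr real_of_int (a $ k) * (0 * ln (x $ k) + h $ k * real_of_int (a $ k) / x $ k))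
              * (\<Prod>j\<in>UNIV - {k}. x $ j powr real_of_int (a $ j)))
        = monom x a * (\<Sum>j\<in>UNIV. real_of_int (a $ j) * h $ j / x $ j)"
      unfolding sum_distrib_left using eqk by (intro sum.cong) auto
  qed
  ultimately show ?thesis by simp
qed

definition sysder where
  "sysder A c \<gamma> x = (\<lambda>h. \<chi> i. \<Sum>a\<in>A i. c (a, i) * \<gamma> (a, i) *
        (monom x a * (\<Sum>j\<in>UNIV. real_of_int (a $ j) * h $ j / x $ j)))"

lemma has_derivative_sys:
  fixes x :: "real^'d::finite"
  assumes pos: "\<And>k. x $ k > 0"
  shows "(cay_system A c \<gamma> has_derivative sysder A c \<gamma> x) (at x)"
proof -
  have comp: "((\<lambda>y. cay_system A c \<gamma> y \<bullet> i) has_derivative (\<lambda>h. sysder A c \<gamma> x h \<bullet> i)) (at x)"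
    if "i \<in> Basis" for i
  proof -
    obtain k where i: "i = axis k 1" using \<open>i \<in> Basis\<close> by (auto simp: Basis_vec_def)
    have "((\<lambda>y. \<Sum>a\<in>A k. c (a, k) * \<gamma> (a, k) * monom y a) has_derivative
          (\<lambda>h. \<Sum>a\<in>A k. c (a, k) * \<gamma> (a, k) * (monom x a * (\<Sum>j\<in>UNIV. real_of_int (a $ j) * h $ j / x $ j)))) (at x)"
      by (intro has_derivative_sum has_derivative_mult_right has_derivative_monom pos)
    then show ?thesis
      by (simp add: i inner_axis cay_system_def sysder_def)
  qed
  show ?thesis
    by (rule iffD2[OF has_derivative_componentwise_within]) (use comp in blast)
qed

lemma exp_quad:
  fixes t :: real
  assumes "\<bar>t\<bar> \<le> 1/4"
  shows "0 \<le> exp t - 1 - t" "exp t - 1 - t \<le> 1/12"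
proof -
  show "0 \<le> exp t - 1 - t" using exp_ge_add_one_self[of t] by linarith
  have e: "exp (-t) \<ge> 1 - t" using exp_ge_add_one_self[of "-t"] by simp
  have "exp t * exp (-t) = 1" by (simp add: exp_minus)
  moreover have "exp t * (1 - t) \<le> exp t * exp (-t)"
    using e by (intro mult_left_mono) auto
  ultimately have "exp t * (1 - t) \<le> 1" by simp
  moreover have t1: "1 - t > 0" using assms by auto
  ultimately have le: "exp t \<le> 1 / (1 - t)" by (simp add: field_simps)
  have "1 / (1 - t) - 1 - t = t^2 / (1 - t)" using t1 by (simp add: field_simps power2_eq_square)
  also have "\<dots> \<le> (1/16) / (3/4)"
  proof (rule frac_le)
    have "\<bar>t\<bar>^2 \<le> (1/4)^2" using assms by (intro power_mono) auto
    then show "t^2 \<le> 1/16" by (simp add: power2_abs power_divide)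
  qed (use assms in auto)
  finally show "exp t - 1 - t \<le> 1/12" using le by simp
qed

lemma mv_row: "((\<chi> i. r i) *v (u::real^'d::finite)) $ i = r i \<bullet> u"
  by (simp add: matrix_vector_mult_def inner_vec_def mult.commute)

lemma chart:
  fixes A :: "'d::finite \<Rightarrow> (int^'d) set" and c :: "(int^'d) \<times> 'd \<Rightarrow> real"
    and a1 a2 :: "'d \<Rightarrow> int^'d"
  assumes fin: "\<And>i. finite (A i)" and in1: "\<And>i. a1 i \<in> A i" and in2: "\<And>i. a2 i \<in> A i"
    and ne: "\<And>i. a1 i \<noteq> a2 i" and sg: "\<And>i. c (a1 i, i) * c (a2 i, i) < 0"
    and inv: "invertible ((\<chi> i. ra (a2 i) - ra (a1 i)) :: real^'d^'d)"
  shows "\<exists>Mg. \<forall>\<gamma> w lam. (\<forall>i. \<forall>a\<in>A i. \<gamma> (a, i) > 0) \<and>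
      (\<forall>i. \<forall>a\<in>A i. (a = a1 i \<or> a = a2 i) \<longrightarrow> - ln (\<gamma> (a, i)) = ra a \<bullet> w + lam i) \<and>
      (\<forall>i. \<forall>a\<in>A i. a \<noteq> a1 i \<and> a \<noteq> a2 i \<longrightarrow> - ln (\<gamma> (a, i)) \<ge> ra a \<bullet> w + lam i + Mg) \<longrightarrow>
      (\<exists>x. (\<forall>k. x $ k > 0) \<and> cay_system A c \<gamma> x = 0 \<and> nondegenerate (cay_system A c \<gamma>) x \<and>
         (\<forall>i. \<forall>a\<in>A i. a \<noteq> a1 i \<and> a \<noteq> a2 i \<longrightarrow>
             \<gamma> (a, i) * monom x a < \<gamma> (a1 i, i) * monom x (a1 i) \<and>
             \<gamma> (a, i) * monom x a < \<gamma> (a2 i, i) * monom x (a2 i)))"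
proof -
  define Bm :: "real^'d^'d" where "Bm = (\<chi> i. ra (a2 i) - ra (a1 i))"
  obtain Binv where BB: "Bm ** Binv = mat 1" and BB': "Binv ** Bm = mat 1"
    using inv unfolding invertible_def Bm_def by blast
  define c1 where "c1 = (\<lambda>i. c (a1 i, i))"
  define c2 where "c2 = (\<lambda>i. c (a2 i, i))"
  have c1nz: "c1 i \<noteq> 0" for i using sg[of i] by (auto simp: c1_def)
  have c2nz: "c2 i \<noteq> 0" for i using sg[of i] by (auto simp: c2_def)
  define sv :: "real^'d" where "sv = (\<chi> i. ln (- c1 i / c2 i))"
  have ratio_pos: "- c1 i / c2 i > 0" for i
    using sg[of i] unfolding c1_def c2_def by (auto simp: divide_less_0_iff mult_less_0_iff)
  have c2sv: "c2 i * exp (sv $ i) = - c1 i" for i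
    using ratio_pos[of i] c2nz[of i] by (simp add: sv_def)
  define rv :: "real^'d" where "rv = (\<chi> i. 1/4)"
  define S where "S = cbox (sv - rv) (sv + rv)"
  have memS: "v \<in> S \<longleftrightarrow> (\<forall>i. \<bar>v $ i - sv $ i\<bar> \<le> 1/4)" for v
  proof -
    have pt: "(sv$i - 1/4 \<le> v$i \<and> v$i \<le> sv$i + 1/4) \<longleftrightarrow> \<bar>v $ i - sv $ i\<bar> \<le> 1/4" for i
      by (auto simp: abs_if)
    have "v \<in> S \<longleftrightarrow> (\<forall>i. sv$i - 1/4 \<le> v$i \<and> v$i \<le> sv$i + 1/4)"
      by (simp add: S_def mem_box_cart rv_def)
    then show ?thesis using pt by blast
  qed
  obtain Kb where Kb: "Kb > 0" "\<And>z. norm (Binv *v z) \<le> norm z * Kb"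
    using bounded_linear.pos_bounded[OF matrix_vector_mul_bounded_linear[of Binv]] by blast
  define Zmax where "Zmax = (\<Sum>i\<in>UNIV. \<Sum>a\<in>A i. norm (ra a - ra (a1 i)))"
  have zle: "norm (ra a - ra (a1 i)) \<le> Zmax" if "a \<in> A i" for a i
  proof -
    have "norm (ra a - ra (a1 i)) \<le> (\<Sum>a\<in>A i. norm (ra a - ra (a1 i)))"
      using that fin by (intro member_le_sum) auto
    also have "\<dots> \<le> Zmax" unfolding Zmax_def
      by (rule member_le_sum[of i UNIV "\<lambda>i. \<Sum>a\<in>A i. norm (ra a - ra (a1 i))"]) (auto intro: sum_nonneg)
    finally show ?thesis .
  qed
  have Zmax0: "Zmax \<ge> 0" unfolding Zmax_def by (auto intro!: sum_nonneg)
  define rS where "rS = norm sv + real CARD('d)"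
  have normS: "norm v \<le> rS" if "v \<in> S" for v
  proof -
    have "norm v \<le> norm sv + norm (v - sv)" by (metis add_diff_cancel_left' norm_triangle_ineq add.commute diff_add_cancel)
    also have "norm (v - sv) \<le> (\<Sum>i\<in>UNIV. \<bar>(v - sv) $ i\<bar>)" by (rule norm_le_l1_cart)
    also have "\<dots> \<le> (\<Sum>i\<in>(UNIV::'d set). 1)"
    proof (rule sum_mono)
      fix i
      have "\<bar>v $ i - sv $ i\<bar> \<le> 1/4" using that memS by blast
      then show "\<bar>(v - sv) $ i\<bar> \<le> 1" by simp
    qed
    finally show ?thesis by (simp add: rS_def)
  qed
  have rS0: "rS \<ge> 0" by (simp add: rS_def)
  define R where "R = Zmax * Kb * rS"
  have Rb: "\<bar>(ra a - ra (a1 i)) \<bullet> (Binv *v v)\<bar> \<le> R" if "v \<in> S" "a \<in> A i" for v a i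
  proof -
    have "\<bar>(ra a - ra (a1 i)) \<bullet> (Binv *v v)\<bar> \<le> norm (ra a - ra (a1 i)) * norm (Binv *v v)"
      by (rule Cauchy_Schwarz_ineq2)
    also have "\<dots> \<le> Zmax * (rS * Kb)"
    proof (rule mult_mono)
      show "norm (Binv *v v) \<le> rS * Kb"
        using Kb(2)[of v] normS[OF that(1)] Kb(1)
        by (meson order_trans mult_right_mono less_imp_le)
    qed (use zle[OF that(2)] Zmax0 in auto)
    finally show ?thesis by (simp add: R_def mult_ac)
  qed
  define cmin where "cmin = Min (range (\<lambda>i. \<bar>c1 i\<bar>))"
  have cmin_le: "cmin \<le> \<bar>c1 i\<bar>" for i unfolding cmin_def by (rule Min_le) auto
  have cmin_pos: "cmin > 0" unfolding cmin_def using c1nz by (subst Min_gr_iff) auto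
  define Ctot where "Ctot = 1 + (\<Sum>i\<in>UNIV. \<Sum>a\<in>A i. \<bar>c (a, i)\<bar>)"
  have Ctot_pos: "Ctot > 0" unfolding Ctot_def by (smt (verit) sum_nonneg abs_ge_zero)
  have Cle: "(\<Sum>a\<in>A i - {a1 i, a2 i}. \<bar>c (a, i)\<bar>) \<le> Ctot" for i
  proof -
    have "(\<Sum>a\<in>A i - {a1 i, a2 i}. \<bar>c (a, i)\<bar>) \<le> (\<Sum>a\<in>A i. \<bar>c (a, i)\<bar>)"
      using fin by (intro sum_mono2) auto
    also have "\<dots> \<le> (\<Sum>i\<in>UNIV. \<Sum>a\<in>A i. \<bar>c (a, i)\<bar>)"
      by (rule member_le_sum[of i UNIV "\<lambda>i. \<Sum>a\<in>A i. \<bar>c (a, i)\<bar>"]) (auto intro: sum_nonneg)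
    finally show ?thesis unfolding Ctot_def by simp
  qed
  define emn where "emn = Min (range (\<lambda>i. exp (sv $ i - 1/4)))"
  have emn_le: "emn \<le> exp (sv $ i - 1/4)" for i unfolding emn_def by (rule Min_le) auto
  have emn_pos: "emn > 0" unfolding emn_def by (subst Min_gr_iff) auto
  define Q where "Q = Ctot * (Zmax + 1) * Kb * real CARD('d)"
  have Q_pos: "Q > 0" unfolding Q_def using Ctot_pos Zmax0 Kb(1) by (intro mult_pos_pos) auto
  define eta where "eta = min (min (cmin / (8 * Ctot)) (cmin / (4 * Q))) (min (emn / 2) (1/2))"
  have eta_pos: "eta > 0" unfolding eta_def using cmin_pos Ctot_pos Q_pos emn_pos by auto
  have "eta \<le> cmin / (8 * Ctot)" unfolding eta_def by (simp add: min_le_iff_disj)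
  then have "Ctot * eta \<le> Ctot * (cmin / (8 * Ctot))" using Ctot_pos by (intro mult_left_mono) auto
  then have eta1: "Ctot * eta \<le> cmin / 8" using Ctot_pos by simp
  have "eta \<le> cmin / (4 * Q)" unfolding eta_def by (simp add: min_le_iff_disj)
  then have "Q * eta \<le> Q * (cmin / (4 * Q))" using Q_pos by (intro mult_left_mono) auto
  then have eta2: "Q * eta \<le> cmin / 4" using Q_pos by simp
  have eta3: "eta < emn" "eta < 1" unfolding eta_def using emn_pos by auto
  define Mg where "Mg = R - ln eta"
  show ?thesis
  proof (intro exI[of _ Mg] allI impI, elim conjE)
    fix \<gamma> :: "(int^'d) \<times> 'd \<Rightarrow> real" and w :: "real^'d" and lam :: "'d \<Rightarrow> real"
    assume gpos: "\<forall>i. \<forall>a\<in>A i. \<gamma> (a, i) > 0"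
      and geq: "\<forall>i. \<forall>a\<in>A i. (a = a1 i \<or> a = a2 i) \<longrightarrow> - ln (\<gamma> (a, i)) = ra a \<bullet> w + lam i"
      and gbig: "\<forall>i. \<forall>a\<in>A i. a \<noteq> a1 i \<and> a \<noteq> a2 i \<longrightarrow> - ln (\<gamma> (a, i)) \<ge> ra a \<bullet> w + lam i + Mg"
    define \<delta> where "\<delta> = (\<lambda>a i. - ln (\<gamma> (a, i)) - (ra a \<bullet> w + lam i))"
    have g_eq: "\<gamma> (a, i) = exp (- (ra a \<bullet> w + lam i) - \<delta> a i)" if "a \<in> A i" for a i
      using gpos that by (simp add: \<delta>_def)
    have d0: "\<delta> a i = 0" if "a \<in> A i" "a = a1 i \<or> a = a2 i" for a i
      using geq that unfolding \<delta>_def by fastforce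
    have dbig: "\<delta> a i \<ge> Mg" if "a \<in> A i" "a \<noteq> a1 i" "a \<noteq> a2 i" for a i
      using gbig that by (force simp: \<delta>_def)
    define uof where "uof = (\<lambda>v. Binv *v v)"
    define Pf where "Pf = (\<lambda>v a i. exp (- \<delta> a i + (ra a - ra (a1 i)) \<bullet> uof v))"
    define Gf where "Gf = (\<lambda>v i. \<Sum>a\<in>A i. c (a, i) * Pf v a i)"
    define Ef where "Ef = (\<lambda>v i. \<Sum>a\<in>A i - {a1 i, a2 i}. c (a, i) * Pf v a i)"
    define xof where "xof = (\<lambda>v. (\<chi> j. exp (w $ j + uof v $ j)) :: real^'d)"
    define ex where "ex = (\<lambda>v i. exp (- lam i + ra (a1 i) \<bullet> uof v))"
    have F1: "(ra (a2 i) - ra (a1 i)) \<bullet> uof v = v $ i" for v i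
    proof -
      have "Bm *v uof v = v" unfolding uof_def by (simp add: matrix_vector_mul_assoc BB)
      then have "(Bm *v uof v) $ i = v $ i" by simp
      then show ?thesis unfolding Bm_def mv_row .
    qed
    have P1: "Pf v (a1 i) i = 1" for v i using d0[OF in1] by (simp add: Pf_def)
    have P2: "Pf v (a2 i) i = exp (v $ i)" for v i using d0[OF in2] by (simp add: Pf_def F1)
    have F3: "\<gamma> (a, i) * monom (xof v) a = ex v i * Pf v a i" if "a \<in> A i" for v a i
    proof -
      have xv: "xof v = (\<chi> j. exp ((w + uof v) $ j))" by (simp add: xof_def)
      have m: "monom (xof v) a = exp (ra a \<bullet> (w + uof v))" unfolding xv by (rule monom_exp)
      have "\<gamma> (a, i) * monom (xof v) a = exp (- (ra a \<bullet> w + lam i) - \<delta> a i + ra a \<bullet> (w + uof v))"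
        by (simp add: g_eq[OF that] m exp_add[symmetric])
      also have "\<dots> = exp ((- lam i + ra (a1 i) \<bullet> uof v) + (- \<delta> a i + (ra a - ra (a1 i)) \<bullet> uof v))"
        by (simp add: inner_add_right inner_diff_left algebra_simps)
      also have "\<dots> = ex v i * Pf v a i" by (simp add: ex_def Pf_def exp_add)
      finally show ?thesis .
    qed
    have F4: "cay_system A c \<gamma> (xof v) $ i = ex v i * Gf v i" for v i
    proof -
      have "cay_system A c \<gamma> (xof v) $ i = (\<Sum>a\<in>A i. c (a, i) * (\<gamma> (a, i) * monom (xof v) a))"
        by (simp add: cay_system_def mult.assoc)
      also have "\<dots> = (\<Sum>a\<in>A i. c (a, i) * (ex v i * Pf v a i))"
        by (rule sum.cong) (simp_all add: F3)
      also have "\<dots> = ex v i * Gf v i" by (simp add: Gf_def sum_distrib_left mult_ac)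
      finally show ?thesis .
    qed
    have splitA: "sum f (A i) = f (a1 i) + f (a2 i) + sum f (A i - {a1 i, a2 i})" for f :: "int^'d \<Rightarrow> real" and i
    proof -
      have "A i = insert (a1 i) (insert (a2 i) (A i - {a1 i, a2 i}))" using in1 in2 by auto
      then have "sum f (A i) = sum f (insert (a1 i) (insert (a2 i) (A i - {a1 i, a2 i})))" by simp
      also have "\<dots> = f (a1 i) + f (a2 i) + sum f (A i - {a1 i, a2 i})"
        using fin[of i] ne[of i] by (simp add: algebra_simps)
      finally show ?thesis .
    qed
    have F5: "Gf v i = c1 i + c2 i * exp (v $ i) + Ef v i" for v i
      unfolding Gf_def Ef_def by (subst splitA) (simp add: P1 P2 c1_def c2_def)
    have F6: "Pf v a i \<le> eta" if "v \<in> S" "a \<in> A i - {a1 i, a2 i}" for v a i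
    proof -
      have "- \<delta> a i + (ra a - ra (a1 i)) \<bullet> uof v \<le> - Mg + R"
        using dbig[of a i] Rb[OF that(1), of a i] that(2) unfolding uof_def by auto
      also have "\<dots> = ln eta" by (simp add: Mg_def)
      finally show ?thesis unfolding Pf_def using eta_pos
        by (metis exp_le_cancel_iff exp_ln)
    qed
    have Ppos: "Pf v a i > 0" for v a i by (simp add: Pf_def)
    have F7: "(\<Sum>a\<in>A i - {a1 i, a2 i}. \<bar>c (a, i)\<bar> * Pf v a i) \<le> Ctot * eta" if "v \<in> S" for v i
    proof -
      have "(\<Sum>a\<in>A i - {a1 i, a2 i}. \<bar>c (a, i)\<bar> * Pf v a i) \<le> (\<Sum>a\<in>A i - {a1 i, a2 i}. \<bar>c (a, i)\<bar> * eta)"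
        by (rule sum_mono) (use F6[OF that] in \<open>auto intro: mult_left_mono\<close>)
      also have "\<dots> = (\<Sum>a\<in>A i - {a1 i, a2 i}. \<bar>c (a, i)\<bar>) * eta" by (simp add: sum_distrib_right)
      also have "\<dots> \<le> Ctot * eta" using Cle[of i] eta_pos by (intro mult_right_mono) auto
      finally show ?thesis .
    qed
    have Ebound: "\<bar>Ef v i\<bar> \<le> Ctot * eta" if "v \<in> S" for v i
    proof -
      have "\<bar>Ef v i\<bar> \<le> (\<Sum>a\<in>A i - {a1 i, a2 i}. \<bar>c (a, i) * Pf v a i\<bar>)" unfolding Ef_def by (rule sum_abs)
      also have "\<dots> = (\<Sum>a\<in>A i - {a1 i, a2 i}. \<bar>c (a, i)\<bar> * Pf v a i)"
        by (rule sum.cong) (auto simp: abs_mult less_imp_le[OF Ppos])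
      finally show ?thesis using F7[of v i, OF that] by linarith
    qed
    define Phi where "Phi = (\<lambda>v. (\<chi> i. v $ i + Gf v i / c1 i) :: real^'d)"
    have cu: "continuous_on S uof"
      unfolding uof_def by (rule linear_continuous_on) (rule matrix_vector_mul_bounded_linear)
    have cPhi: "continuous_on S Phi"
      unfolding Phi_def Gf_def Pf_def using c1nz by (intro continuous_intros cu) auto
    have svS: "sv \<in> S" by (simp add: memS)
    have keyPhi: "Gf v i / c1 i = 1 - exp (v $ i - sv $ i) + Ef v i / c1 i" for v i
    proof -
      have "exp (v $ i) = exp (sv $ i) * exp (v $ i - sv $ i)" by (simp add: exp_add[symmetric])
      then have "c2 i * exp (v $ i) = - c1 i * exp (v $ i - sv $ i)" using c2sv[of i] by (simp add: mult.assoc[symmetric])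
      then show ?thesis using F5[of v i] c1nz[of i] by (simp add: field_simps)
    qed
    have Ec1: "\<bar>Ef v i / c1 i\<bar> \<le> 1/8" if "v \<in> S" for v i
    proof -
      have "\<bar>Ef v i\<bar> \<le> \<bar>c1 i\<bar> / 8" using Ebound[OF that, of i] eta1 cmin_le[of i] by linarith
      then show ?thesis using c1nz[of i] by (simp add: abs_divide field_simps)
    qed
    have PhiS: "Phi v \<in> S" if "v \<in> S" for v
    proof -
      have "\<bar>Phi v $ i - sv $ i\<bar> \<le> 1/4" for i
      proof -
        define t where "t = v $ i - sv $ i"
        have t: "\<bar>t\<bar> \<le> 1/4" using that memS t_def by blast
        have eq: "Phi v $ i - sv $ i = - (exp t - 1 - t) + Ef v i / c1 i"
          by (simp add: Phi_def keyPhi t_def)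
        have y: "Ef v i / c1 i \<le> 1/8 \<and> - (Ef v i / c1 i) \<le> 1/8"
          using Ec1[OF that, of i] by (simp only: abs_le_iff)
        show ?thesis unfolding abs_le_iff eq using exp_quad[OF t] y by linarith
      qed
      then show ?thesis by (simp add: memS)
    qed
    obtain v0 where v0S: "v0 \<in> S" and fix0: "Phi v0 = v0"
    proof (rule brouwer[of S Phi])
      show "compact S" by (simp add: S_def compact_cbox)
      show "convex S" by (simp add: S_def convex_box)
      show "S \<noteq> {}" using svS by blast
      show "continuous_on S Phi" by (rule cPhi)
      show "Phi \<in> S \<rightarrow> S" using PhiS by blast
    qed
    have G0: "Gf v0 i = 0" for i
    proof -
      have "Phi v0 $ i = v0 $ i" using fix0 by simp
      then have "Gf v0 i / c1 i = 0" by (simp add: Phi_def)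
      then show ?thesis using c1nz[of i] by simp
    qed
    define x0 where "x0 = xof v0"
    have x0pos: "\<forall>k. x0 $ k > 0" by (simp add: x0_def xof_def)
    have sol: "cay_system A c \<gamma> x0 = 0"
      by (simp add: vec_eq_iff x0_def F4 G0)
    have expos: "ex v i > 0" for v i by (simp add: ex_def)
    have tv0: "\<bar>v0 $ i - sv $ i\<bar> \<le> 1/4" for i using v0S memS by blast
    have P2big: "eta < Pf v0 (a2 i) i" for i
    proof -
      have "eta < exp (sv $ i - 1/4)" using eta3 emn_le[of i] by linarith
      also have "\<dots> \<le> exp (v0 $ i)" using tv0[of i] unfolding exp_le_cancel_iff abs_le_iff by linarith
      finally show ?thesis by (simp add: P2)
    qed
    have ratio: "\<gamma> (a, i) * monom x0 a < \<gamma> (a1 i, i) * monom x0 (a1 i) \<and>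
             \<gamma> (a, i) * monom x0 a < \<gamma> (a2 i, i) * monom x0 (a2 i)"
      if "a \<in> A i" "a \<noteq> a1 i" "a \<noteq> a2 i" for a i
    proof -
      have pe: "Pf v0 a i \<le> eta" using F6[OF v0S, of a i] that by auto
      have "\<gamma> (a, i) * monom x0 a = ex v0 i * Pf v0 a i" using F3[OF that(1)] x0_def by simp
      moreover have "\<gamma> (a1 i, i) * monom x0 (a1 i) = ex v0 i * 1" using F3[OF in1] x0_def P1 by simp
      moreover have "\<gamma> (a2 i, i) * monom x0 (a2 i) = ex v0 i * Pf v0 (a2 i) i" using F3[OF in2] x0_def by simp
      moreover have "Pf v0 a i < 1" using pe eta3 by linarith
      moreover have "Pf v0 a i < Pf v0 (a2 i) i" using pe P2big[of i] by linarith
      ultimately show ?thesis using expos[of v0 i] by (simp add: mult_strict_left_mono)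
    qed
    have nd: "nondegenerate (cay_system A c \<gamma>) x0"
    proof -
      define F' where "F' = sysder A c \<gamma> x0"
      have hd: "(cay_system A c \<gamma> has_derivative F') (at x0)"
        unfolding F'_def by (rule has_derivative_sys) (use x0pos in auto)
      have lin: "linear F'" using has_derivative_linear[OF hd] .
      have inj0: "h = 0" if Fh: "F' h = 0" for h
      proof -
        define \<eta> :: "real^'d" where "\<eta> = (\<chi> j. h $ j / x0 $ j)"
        define \<zeta> where "\<zeta> = Bm *v \<eta>"
        have eta_z: "\<eta> = Binv *v \<zeta>" unfolding \<zeta>_def by (simp add: matrix_vector_mul_assoc BB')
        have D1: "(\<Sum>j\<in>UNIV. real_of_int (a $ j) * h $ j / x0 $ j) = ra a \<bullet> \<eta>" for a
          by (simp add: inner_vec_def ra_def \<eta>_def)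
        have S1: "(\<Sum>a\<in>A i. c (a, i) * Pf v0 a i * (ra a \<bullet> \<eta>)) = 0" for i
        proof -
          have "0 = F' h $ i" using Fh by simp
          also have "\<dots> = (\<Sum>a\<in>A i. c (a, i) * (\<gamma> (a, i) * monom x0 a) * (ra a \<bullet> \<eta>))"
            unfolding F'_def sysder_def D1 by (simp add: mult_ac)
          also have "\<dots> = (\<Sum>a\<in>A i. ex v0 i * (c (a, i) * Pf v0 a i * (ra a \<bullet> \<eta>)))"
            by (rule sum.cong) (simp_all add: F3[of _ i v0, folded x0_def])
          also have "\<dots> = ex v0 i * (\<Sum>a\<in>A i. c (a, i) * Pf v0 a i * (ra a \<bullet> \<eta>))"
            by (simp add: sum_distrib_left)
          finally show ?thesis using expos[of v0 i] by simp
        qed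
        have S2: "(\<Sum>a\<in>A i. c (a, i) * Pf v0 a i * ((ra a - ra (a1 i)) \<bullet> \<eta>)) = 0" for i
        proof -
          have "(\<Sum>a\<in>A i. c (a, i) * Pf v0 a i * ((ra a - ra (a1 i)) \<bullet> \<eta>))
              = (\<Sum>a\<in>A i. c (a, i) * Pf v0 a i * (ra a \<bullet> \<eta>)) - (ra (a1 i) \<bullet> \<eta>) * Gf v0 i"
            by (simp add: Gf_def inner_diff_left algebra_simps sum_subtractf sum_distrib_left)
          then show ?thesis using S1[of i] G0[of i] by simp
        qed
        have zrow: "(ra (a2 i) - ra (a1 i)) \<bullet> \<eta> = \<zeta> $ i" for i
          unfolding \<zeta>_def Bm_def mv_row ..
        define rest where "rest = (\<lambda>i. \<Sum>a\<in>A i - {a1 i, a2 i}. c (a, i) * Pf v0 a i * ((ra a - ra (a1 i)) \<bullet> \<eta>))"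
        have S3: "c2 i * exp (v0 $ i) * \<zeta> $ i = - rest i" for i
          using S2[of i] unfolding splitA[of _ i] by (simp add: P1 P2 c2_def zrow rest_def)
        define M where "M = Max (range (\<lambda>j. \<bar>\<zeta> $ j\<bar>))"
        have Mge: "\<bar>\<zeta> $ j\<bar> \<le> M" for j unfolding M_def by (rule Max_ge) auto
        obtain i0 where i0: "M = \<bar>\<zeta> $ i0\<bar>"
        proof -
          have "M \<in> range (\<lambda>j. \<bar>\<zeta> $ j\<bar>)" unfolding M_def by (rule Max_in) auto
          then show ?thesis using that by blast
        qed
        have M0: "M \<ge> 0" using Mge[of i0] by simp
        have nz: "norm \<zeta> \<le> real CARD('d) * M"
        proof -
          have "norm \<zeta> \<le> (\<Sum>j\<in>UNIV. \<bar>\<zeta> $ j\<bar>)" by (rule norm_le_l1_cart)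
          also have "\<dots> \<le> of_nat (card (UNIV::'d set)) * M" by (rule sum_bounded_above) (rule Mge)
          finally show ?thesis by simp
        qed
        have ne_: "norm \<eta> \<le> real CARD('d) * M * Kb"
          using Kb(2)[of \<zeta>] nz Kb(1) unfolding eta_z[symmetric]
          by (meson order_trans mult_right_mono less_imp_le)
        have zb: "\<bar>(ra a - ra (a1 i0)) \<bullet> \<eta>\<bar> \<le> (Zmax + 1) * Kb * real CARD('d) * M" if "a \<in> A i0" for a
        proof -
          have "\<bar>(ra a - ra (a1 i0)) \<bullet> \<eta>\<bar> \<le> norm (ra a - ra (a1 i0)) * norm \<eta>" by (rule Cauchy_Schwarz_ineq2)
          also have "\<dots> \<le> (Zmax + 1) * (real CARD('d) * M * Kb)"
            using zle[OF that] ne_ Zmax0 by (intro mult_mono) auto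
          finally show ?thesis by (simp add: mult_ac)
        qed
        have restb: "\<bar>rest i0\<bar> \<le> Q * eta * M"
        proof -
          have "\<bar>rest i0\<bar> \<le> (\<Sum>a\<in>A i0 - {a1 i0, a2 i0}. \<bar>c (a, i0) * Pf v0 a i0 * ((ra a - ra (a1 i0)) \<bullet> \<eta>)\<bar>)"
            unfolding rest_def by (rule sum_abs)
          also have "\<dots> \<le> (\<Sum>a\<in>A i0 - {a1 i0, a2 i0}. (\<bar>c (a, i0)\<bar> * Pf v0 a i0) * ((Zmax + 1) * Kb * real CARD('d) * M))"
          proof (rule sum_mono)
            fix a assume "a \<in> A i0 - {a1 i0, a2 i0}"
            then have "\<bar>(ra a - ra (a1 i0)) \<bullet> \<eta>\<bar> \<le> (Zmax + 1) * Kb * real CARD('d) * M" using zb by auto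
            then show "\<bar>c (a, i0) * Pf v0 a i0 * ((ra a - ra (a1 i0)) \<bullet> \<eta>)\<bar>
                \<le> (\<bar>c (a, i0)\<bar> * Pf v0 a i0) * ((Zmax + 1) * Kb * real CARD('d) * M)"
              unfolding abs_mult using less_imp_le[OF Ppos[of v0 a i0]]
              by (simp add: mult_left_mono)
          qed
          also have "\<dots> = (\<Sum>a\<in>A i0 - {a1 i0, a2 i0}. \<bar>c (a, i0)\<bar> * Pf v0 a i0) * ((Zmax + 1) * Kb * real CARD('d) * M)"
            by (simp add: sum_distrib_right)
          also have "\<dots> \<le> (Ctot * eta) * ((Zmax + 1) * Kb * real CARD('d) * M)"
            using F7[of v0 i0, OF v0S] Zmax0 Kb(1) M0 by (intro mult_right_mono) auto
          also have "\<dots> = Q * eta * M" by (simp add: Q_def mult_ac)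
          finally show ?thesis .
        qed
        have lhs: "\<bar>c2 i0 * exp (v0 $ i0)\<bar> \<ge> cmin * (3/4)"
        proof -
          have "c2 i0 * exp (v0 $ i0) = - c1 i0 * exp (v0 $ i0 - sv $ i0)"
          proof -
            have "exp (v0 $ i0) = exp (sv $ i0) * exp (v0 $ i0 - sv $ i0)" by (simp add: exp_add[symmetric])
            then show ?thesis using c2sv[of i0] by (simp add: mult.assoc[symmetric])
          qed
          then have "\<bar>c2 i0 * exp (v0 $ i0)\<bar> = \<bar>c1 i0\<bar> * exp (v0 $ i0 - sv $ i0)" by (simp add: abs_mult)
          moreover have "exp (v0 $ i0 - sv $ i0) \<ge> 3/4"
            using exp_ge_add_one_self[of "v0 $ i0 - sv $ i0"] tv0[of i0] unfolding abs_le_iff by linarith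
          moreover have "cmin * (3/4) \<le> \<bar>c1 i0\<bar> * exp (v0 $ i0 - sv $ i0)"
            using calculation(2) cmin_le[of i0] cmin_pos by (intro mult_mono) auto
          ultimately show ?thesis by simp
        qed
        have "cmin * (3/4) * M \<le> \<bar>c2 i0 * exp (v0 $ i0)\<bar> * M" using lhs M0 by (rule mult_right_mono)
        also have "\<dots> = \<bar>rest i0\<bar>"
        proof -
          have "\<bar>c2 i0 * exp (v0 $ i0)\<bar> * M = \<bar>c2 i0 * exp (v0 $ i0) * \<zeta> $ i0\<bar>" using i0 by (simp only: abs_mult)
          also have "\<dots> = \<bar>rest i0\<bar>" using S3[of i0] by simp
          finally show ?thesis .
        qed
        also have "\<dots> \<le> Q * eta * M" by (rule restb)
        also have "\<dots> \<le> cmin / 4 * M" using eta2 M0 by (rule mult_right_mono)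
        finally have "cmin * (3/4) * M \<le> cmin / 4 * M" .
        then have "M \<le> 0" using cmin_pos by (simp add: field_simps mult_le_0_iff)
        then have "\<zeta> = 0" using Mge M0 by (simp add: vec_eq_iff)
        then have "\<eta> = 0" using eta_z by simp
        then show "h = 0" using x0pos by (simp add: vec_eq_iff \<eta>_def) (metis less_irrefl)
      qed
      have "inj F'" using lin inj0 by (simp add: linear_injective_0)
      then have "det (matrix F') \<noteq> 0" using det_nz_iff_inj[OF lin] by simp
      then show ?thesis unfolding nondegenerate_def using hd by blast
    qed
    show "\<exists>x. (\<forall>k. x $ k > 0) \<and> cay_system A c \<gamma> x = 0 \<and> nondegenerate (cay_system A c \<gamma>) x \<and>
         (\<forall>i. \<forall>a\<in>A i. a \<noteq> a1 i \<and> a \<noteq> a2 i \<longrightarrow>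
             \<gamma> (a, i) * monom x a < \<gamma> (a1 i, i) * monom x (a1 i) \<and>
             \<gamma> (a, i) * monom x a < \<gamma> (a2 i, i) * monom x (a2 i))"
      using x0pos sol nd ratio by blast
  qed
qed

lemma two_diff: "(x::'a) \<noteq> y \<Longrightarrow> x' \<noteq> y' \<Longrightarrow> {x, y} \<noteq> {x', y'} \<Longrightarrow> \<exists>a\<in>{x, y}. a \<notin> {x', y'}"
  by auto

theorem theorem3p3:
  fixes A :: "'d::finite \<Rightarrow> (int^'d) set"
    and c :: "(int^'d) \<times> 'd \<Rightarrow> real"
    and p :: nat
    and Dl :: "nat \<Rightarrow> ((int^'d) \<times> 'd) set"
    and l :: nat
    and m :: "nat \<Rightarrow> ((int^'d) \<times> 'd \<Rightarrow> real)"
  assumes fin: "\<And>i. finite (A i)"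
    and has_simplex: "\<exists>S. cay_simplex A S"
    and c_zero: "\<And>a i. a \<notin> A i \<Longrightarrow> c (a, i) = 0"
    and distinct: "inj_on Dl {..<p}"
    and mixed: "\<And>k. k < p \<Longrightarrow> mixed_simplex A (Dl k)"
    and decorated: "\<And>k. k < p \<Longrightarrow> pos_decorated c (Dl k)"
    and common: "\<exists>h. \<forall>k<p. regular_cell cay_emb (cayley A) h (Dl k)"
    and cone: "\<And>h. (\<forall>k<p. regular_cell cay_emb (cayley A) h (Dl k)) \<longleftrightarrow>
                    (\<forall>r<l. (\<Sum>q\<in>cayley A. m r q * h q) > 0)"
  shows "\<exists>t0 :: (nat \<Rightarrow> real) \<Rightarrow> real.
           (\<forall>eps. (\<forall>r<l. 0 < eps r \<and> eps r < 1) \<longrightarrow> t0 eps > 0) \<and>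
           (\<forall>\<gamma> :: (int^'d) \<times> 'd \<Rightarrow> real.
              (\<forall>q\<in>cayley A. \<gamma> q > 0) \<and>
              (\<exists>eps. (\<forall>r<l. 0 < eps r \<and> eps r < 1) \<and>
                   (\<forall>r<l. (\<Prod>q\<in>cayley A. \<gamma> q powr m r q) \<le> t0 eps powr eps r))
              \<longrightarrow> (\<exists>X. finite X \<and> card X = p \<and>
                     (\<forall>x\<in>X. (\<forall>k. x $ k > 0) \<and> cay_system A c \<gamma> x = 0 \<and>
                             nondegenerate (cay_system A c \<gamma>) x)))"
proof -
  have finC: "finite (cayley A)" using finite_cayley[OF fin] .
  have csx: "cay_simplex A (Dl k)" if "k < p" for k using mixed[OF that] by (simp add: mixed_simplex_def)
  have DlC: "Dl k \<subseteq> cayley A" if "k < p" for k using csx[OF that] by (simp add: cay_simplex_def)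
  have "\<forall>k i. \<exists>x y. k < p \<longrightarrow> x \<noteq> y \<and> {a. (a, i) \<in> Dl k} = {x, y}"
  proof (intro allI impI)
    fix k i
    show "\<exists>x y. k < p \<longrightarrow> x \<noteq> y \<and> {a. (a, i) \<in> Dl k} = {x, y}"
    proof (cases "k < p")
      case True
      then have "card {a. (a, i) \<in> Dl k} = 2" using mixed[OF True] by (simp add: mixed_simplex_def)
      then show ?thesis by (auto simp: card_2_iff)
    qed auto
  qed
  then obtain a1 a2 where a12: "\<And>k i. k < p \<Longrightarrow> a1 k i \<noteq> a2 k i \<and> {a. (a, i) \<in> Dl k} = {a1 k i, a2 k i}"
    by metis
  have memD: "(a, i) \<in> Dl k \<longleftrightarrow> a = a1 k i \<or> a = a2 k i" if "k < p" for k a i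
  proof -
    have "(a, i) \<in> Dl k \<longleftrightarrow> a \<in> {a. (a, i) \<in> Dl k}" by simp
    also have "\<dots> \<longleftrightarrow> a = a1 k i \<or> a = a2 k i" using a12[OF that, of i] by simp
    finally show ?thesis .
  qed
  have in1: "a1 k i \<in> A i" if "k < p" for k i
    using memD[OF that, of "a1 k i" i] DlC[OF that] by (auto simp: cayley_def)
  have in2: "a2 k i \<in> A i" if "k < p" for k i
    using memD[OF that, of "a2 k i" i] DlC[OF that] by (auto simp: cayley_def)
  have ne12: "a1 k i \<noteq> a2 k i" if "k < p" for k i using a12[OF that] by blast
  have sg: "c (a1 k i, i) * c (a2 k i, i) < 0" if "k < p" for k i
    using decorated[OF that] memD[OF that] ne12[OF that, of i] unfolding pos_decorated_def by blast
  have inv: "invertible ((\<chi> i. ra (a2 k i) - ra (a1 k i)) :: real^'d^'d)" if "k < p" for k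
    by (rule mixed_inv[OF csx[OF that] memD[OF that] ne12[OF that]])
  define PP where "PP = (\<lambda>k Mg. \<forall>\<gamma> w lam. (\<forall>i. \<forall>a\<in>A i. \<gamma> (a, i) > 0) \<and>
      (\<forall>i. \<forall>a\<in>A i. (a = a1 k i \<or> a = a2 k i) \<longrightarrow> - ln (\<gamma> (a, i)) = ra a \<bullet> w + lam i) \<and>
      (\<forall>i. \<forall>a\<in>A i. a \<noteq> a1 k i \<and> a \<noteq> a2 k i \<longrightarrow> - ln (\<gamma> (a, i)) \<ge> ra a \<bullet> w + lam i + Mg) \<longrightarrow>
      (\<exists>x. (\<forall>k. x $ k > 0) \<and> cay_system A c \<gamma> x = 0 \<and> nondegenerate (cay_system A c \<gamma>) x \<and>
         (\<forall>i. \<forall>a\<in>A i. a \<noteq> a1 k i \<and> a \<noteq> a2 k i \<longrightarrow>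
             \<gamma> (a, i) * monom x a < \<gamma> (a1 k i, i) * monom x (a1 k i) \<and>
             \<gamma> (a, i) * monom x a < \<gamma> (a2 k i, i) * monom x (a2 k i))))"
  have chk: "\<exists>Mg. PP k Mg" if "k < p" for k
    unfolding PP_def using chart[OF fin in1[OF that] in2[OF that] ne12[OF that] sg[OF that] inv[OF that]] by blast
  define Mgf where "Mgf = (\<lambda>k. SOME Mg. PP k Mg)"
  have Mgf: "PP k (Mgf k)" if "k < p" for k
    unfolding Mgf_def using chk[OF that] by (rule someI_ex)
  obtain G where Gc: "\<forall>k<p. regular_cell cay_emb (cayley A) G (Dl k)" using common by blast
  have mG: "\<forall>r<l. (\<Sum>q\<in>cayley A. m r q * G q) > 0" using cone Gc by blast
  have DlNE: "Dl k \<noteq> {}" if "k < p" for k using memD[OF that, of "a1 k undefined" undefined] by auto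
  have "\<exists>w lam. \<forall>a i. (a, i) \<in> cayley A \<longrightarrow>
           ra a \<bullet> w + lam i \<le> G (a, i) \<and> (ra a \<bullet> w + lam i = G (a, i) \<longleftrightarrow> (a, i) \<in> Dl k)" if "k < p" for k
    using regcell_affine[of A G "Dl k"] Gc that DlNE[OF that] by blast
  then obtain wG lamG where GL: "\<And>k a i. k < p \<Longrightarrow> (a, i) \<in> cayley A \<Longrightarrow>
           ra a \<bullet> wG k + lamG k i \<le> G (a, i) \<and> (ra a \<bullet> wG k + lamG k i = G (a, i) \<longleftrightarrow> (a, i) \<in> Dl k)"
    by metis
  define GS where "GS = (\<lambda>(k, q). G q - (ra (fst q) \<bullet> wG k + lamG k (snd q))) ` (SIGMA k:{..<p}. cayley A - Dl k)"
  define gmin where "gmin = Min (insert 1 GS)"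
  have finGS: "finite GS" unfolding GS_def using finC by auto
  have gmin_pos: "gmin > 0"
  proof -
    have "\<forall>g\<in>GS. g > 0"
    proof
      fix g assume "g \<in> GS"
      then obtain k a i where k: "k < p" and q: "(a, i) \<in> cayley A" "(a, i) \<notin> Dl k"
        and g: "g = G (a, i) - (ra a \<bullet> wG k + lamG k i)" unfolding GS_def by auto
      show "g > 0" using GL[OF k q(1)] q(2) g by auto
    qed
    then show ?thesis unfolding gmin_def using finGS by (subst Min_gr_iff) auto
  qed
  have gmin_le: "gmin \<le> G (a, i) - (ra a \<bullet> wG k + lamG k i)"
    if "k < p" "(a, i) \<in> cayley A" "(a, i) \<notin> Dl k" for k a i
  proof -
    have "G (a, i) - (ra a \<bullet> wG k + lamG k i) \<in> GS" unfolding GS_def using that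
      by (auto intro!: image_eqI[of _ _ "(k, (a, i))"])
    then show ?thesis unfolding gmin_def using finGS by (intro Min_le) auto
  qed
  define Mgn where "Mgn = 1 + (\<Sum>k<p. \<bar>Mgf k\<bar>)"
  have Mgn_ge: "Mgf k \<le> Mgn" if "k < p" for k
  proof -
    have "\<bar>Mgf k\<bar> \<le> (\<Sum>k<p. \<bar>Mgf k\<bar>)" using that by (intro member_le_sum) auto
    then show ?thesis unfolding Mgn_def by linarith
  qed
  have Mgn_pos: "Mgn > 0" unfolding Mgn_def by (smt (verit) sum_nonneg abs_ge_zero)
  define mg where "mg = (\<lambda>r. \<Sum>q\<in>cayley A. m r q * G q)"
  define Mm where "Mm = 1 + (\<Sum>r<l. \<bar>mg r\<bar>)"
  have Mm_ge: "mg r \<le> Mm" if "r < l" for r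
  proof -
    have "\<bar>mg r\<bar> \<le> (\<Sum>r<l. \<bar>mg r\<bar>)" using that by (intro member_le_sum) auto
    then show ?thesis unfolding Mm_def by linarith
  qed
  have Mm_pos: "Mm > 0" unfolding Mm_def by (smt (verit) sum_nonneg abs_ge_zero)
  define emin where "emin = (\<lambda>eps::nat \<Rightarrow> real. Min (insert 1 (eps ` {..<l})))"
  define T where "T = (\<lambda>eps. 2 * Mm * Mgn / (gmin * emin eps))"
  define t0 where "t0 = (\<lambda>eps. exp (- T eps))"
  show ?thesis
  proof (intro exI[of _ t0] conjI allI impI)
    fix eps :: "nat \<Rightarrow> real"
    show "t0 eps > 0" by (simp add: t0_def)
  next
    fix \<gamma> :: "(int^'d) \<times> 'd \<Rightarrow> real"
    assume asm: "(\<forall>q\<in>cayley A. \<gamma> q > 0) \<and>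
              (\<exists>eps. (\<forall>r<l. 0 < eps r \<and> eps r < 1) \<and>
                   (\<forall>r<l. (\<Prod>q\<in>cayley A. \<gamma> q powr m r q) \<le> t0 eps powr eps r))"
    then have gpos: "\<forall>q\<in>cayley A. \<gamma> q > 0" by blast
    from asm obtain eps where eps01: "\<forall>r<l. 0 < eps r \<and> eps r < 1"
      and prodc: "\<forall>r<l. (\<Prod>q\<in>cayley A. \<gamma> q powr m r q) \<le> t0 eps powr eps r" by blast
    have emin_pos: "emin eps > 0" unfolding emin_def using eps01 by (subst Min_gr_iff) auto
    have emin_le: "emin eps \<le> eps r" if "r < l" for r unfolding emin_def using that by (intro Min_le) auto
    define H where "H = (\<lambda>q. - ln (\<gamma> q))"
    have Tpos: "T eps > 0" unfolding T_def using Mm_pos Mgn_pos gmin_pos emin_pos by simp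
    have mH: "(\<Sum>q\<in>cayley A. m r q * H q) \<ge> emin eps * T eps" if "r < l" for r
    proof -
      have "(\<Prod>q\<in>cayley A. \<gamma> q powr m r q) = exp (\<Sum>q\<in>cayley A. m r q * ln (\<gamma> q))"
        using gpos by (simp add: exp_sum finC powr_def) (rule prod.cong, auto)
      moreover have "t0 eps powr eps r = exp (- (eps r * T eps))" by (simp add: t0_def powr_def)
      moreover have "(\<Prod>q\<in>cayley A. \<gamma> q powr m r q) \<le> t0 eps powr eps r" using prodc that by blast
      ultimately have "exp (\<Sum>q\<in>cayley A. m r q * ln (\<gamma> q)) \<le> exp (- (eps r * T eps))"
        by simp
      then have "(\<Sum>q\<in>cayley A. m r q * ln (\<gamma> q)) \<le> - (eps r * T eps)" by simp
      then have "eps r * T eps \<le> (\<Sum>q\<in>cayley A. m r q * H q)"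
        by (simp add: H_def sum_negf)
      moreover have "emin eps * T eps \<le> eps r * T eps" using emin_le[OF that] Tpos by (simp add: mult_right_mono)
      ultimately show ?thesis by linarith
    qed
    define s where "s = Mgn / gmin"
    have s_pos: "s > 0" unfolding s_def using Mgn_pos gmin_pos by simp
    define H' where "H' = (\<lambda>q. H q - s * G q)"
    have eT: "emin eps * T eps = 2 * (Mm * s)" unfolding T_def s_def using emin_pos gmin_pos by (simp add: field_simps)
    have mH': "(\<Sum>q\<in>cayley A. m r q * H' q) > 0" if "r < l" for r
    proof -
      have "(\<Sum>q\<in>cayley A. m r q * H' q) = (\<Sum>q\<in>cayley A. m r q * H q) - s * mg r"
        by (simp add: H'_def mg_def algebra_simps sum_subtractf sum_distrib_left)
      moreover have "s * mg r \<le> Mm * s" using Mm_ge[OF that] s_pos by (simp add: mult_left_mono mult.commute)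
      moreover have "Mm * s > 0" using Mm_pos s_pos by simp
      ultimately show ?thesis using mH[OF that] eT by linarith
    qed
    have H'c: "\<forall>k<p. regular_cell cay_emb (cayley A) H' (Dl k)" using cone mH' by blast
    have "\<exists>w lam. \<forall>a i. (a, i) \<in> cayley A \<longrightarrow>
           ra a \<bullet> w + lam i \<le> H' (a, i) \<and> (ra a \<bullet> w + lam i = H' (a, i) \<longleftrightarrow> (a, i) \<in> Dl k)" if "k < p" for k
      using regcell_affine[of A H' "Dl k"] H'c that DlNE[OF that] by blast
    then obtain wH lamH where HL: "\<And>k a i. k < p \<Longrightarrow> (a, i) \<in> cayley A \<Longrightarrow>
           ra a \<bullet> wH k + lamH k i \<le> H' (a, i) \<and> (ra a \<bullet> wH k + lamH k i = H' (a, i) \<longleftrightarrow> (a, i) \<in> Dl k)"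
      by metis
    have sol: "\<exists>x. (\<forall>j. x $ j > 0) \<and> cay_system A c \<gamma> x = 0 \<and> nondegenerate (cay_system A c \<gamma>) x \<and>
         (\<forall>i. \<forall>a\<in>A i. a \<noteq> a1 k i \<and> a \<noteq> a2 k i \<longrightarrow>
             \<gamma> (a, i) * monom x a < \<gamma> (a1 k i, i) * monom x (a1 k i) \<and>
             \<gamma> (a, i) * monom x a < \<gamma> (a2 k i, i) * monom x (a2 k i))" if kp: "k < p" for k
    proof -
      define w where "w = wH k + s *\<^sub>R wG k"
      define lam where "lam = (\<lambda>i. lamH k i + s * lamG k i)"
      have Lsum: "ra a \<bullet> w + lam i = (ra a \<bullet> wH k + lamH k i) + s * (ra a \<bullet> wG k + lamG k i)" for a i
        by (simp add: w_def lam_def inner_add_right algebra_simps)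
      have HH: "H (a, i) = H' (a, i) + s * G (a, i)" for a i by (simp add: H'_def)
      have c1: "\<forall>i. \<forall>a\<in>A i. \<gamma> (a, i) > 0" using gpos by (auto simp: cayley_def)
      have c2: "\<forall>i. \<forall>a\<in>A i. (a = a1 k i \<or> a = a2 k i) \<longrightarrow> - ln (\<gamma> (a, i)) = ra a \<bullet> w + lam i"
      proof (intro allI ballI impI)
        fix i a assume a: "a \<in> A i" "a = a1 k i \<or> a = a2 k i"
        then have inD: "(a, i) \<in> Dl k" using memD[OF kp] by blast
        have aC: "(a, i) \<in> cayley A" using a by (simp add: cayley_def)
        have "H' (a, i) = ra a \<bullet> wH k + lamH k i" using HL[OF kp aC] inD by auto
        moreover have "G (a, i) = ra a \<bullet> wG k + lamG k i" using GL[OF kp aC] inD by auto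
        ultimately show "- ln (\<gamma> (a, i)) = ra a \<bullet> w + lam i"
          using HH[of a i] Lsum[of a i] by (simp add: H_def)
      qed
      have c3: "\<forall>i. \<forall>a\<in>A i. a \<noteq> a1 k i \<and> a \<noteq> a2 k i \<longrightarrow> - ln (\<gamma> (a, i)) \<ge> ra a \<bullet> w + lam i + Mgf k"
      proof (intro allI ballI impI)
        fix i a assume a: "a \<in> A i" "a \<noteq> a1 k i \<and> a \<noteq> a2 k i"
        then have nD: "(a, i) \<notin> Dl k" using memD[OF kp] by blast
        have aC: "(a, i) \<in> cayley A" using a by (simp add: cayley_def)
        have h1: "H' (a, i) \<ge> ra a \<bullet> wH k + lamH k i" using HL[OF kp aC] by auto
        have h2: "G (a, i) - (ra a \<bullet> wG k + lamG k i) \<ge> gmin" using gmin_le[OF kp aC nD] .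
        have "s * gmin = Mgn" unfolding s_def using gmin_pos by simp
        moreover have "s * gmin \<le> s * (G (a, i) - (ra a \<bullet> wG k + lamG k i))"
          using h2 s_pos by (simp add: mult_left_mono)
        ultimately have "H (a, i) \<ge> ra a \<bullet> w + lam i + Mgn"
          using HH[of a i] Lsum[of a i] h1 by (simp add: algebra_simps)
        then show "- ln (\<gamma> (a, i)) \<ge> ra a \<bullet> w + lam i + Mgf k"
          using Mgn_ge[OF kp] by (simp add: H_def)
      qed
      show ?thesis using Mgf[OF kp] c1 c2 c3 unfolding PP_def by blast
    qed
    obtain xk where xk: "\<And>k. k < p \<Longrightarrow> (\<forall>j. xk k $ j > 0) \<and> cay_system A c \<gamma> (xk k) = 0 \<and>
         nondegenerate (cay_system A c \<gamma>) (xk k) \<and>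
         (\<forall>i. \<forall>a\<in>A i. a \<noteq> a1 k i \<and> a \<noteq> a2 k i \<longrightarrow>
             \<gamma> (a, i) * monom (xk k) a < \<gamma> (a1 k i, i) * monom (xk k) (a1 k i) \<and>
             \<gamma> (a, i) * monom (xk k) a < \<gamma> (a2 k i, i) * monom (xk k) (a2 k i))"
      using sol by metis
    have injx: "inj_on xk {..<p}"
    proof (rule inj_onI)
      fix k k' assume k: "k \<in> {..<p}" and k': "k' \<in> {..<p}" and eq: "xk k = xk k'"
      show "k = k'"
      proof (rule ccontr)
        assume "k \<noteq> k'"
        then have "Dl k \<noteq> Dl k'" using distinct k k' by (auto dest: inj_onD)
        have "\<exists>i. {a1 k i, a2 k i} \<noteq> {a1 k' i, a2 k' i}"
        proof (rule ccontr)
          assume "\<nexists>i. {a1 k i, a2 k i} \<noteq> {a1 k' i, a2 k' i}"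
          then have all: "\<And>i. {a1 k i, a2 k i} = {a1 k' i, a2 k' i}" by blast
          have "Dl k = Dl k'"
          proof (rule set_eqI)
            fix q :: "(int^'d) \<times> 'd"
            obtain a i where q: "q = (a, i)" by (cases q)
            have "(a, i) \<in> Dl k \<longleftrightarrow> a \<in> {a1 k i, a2 k i}" using memD[of k a i] k by simp
            also have "\<dots> \<longleftrightarrow> a \<in> {a1 k' i, a2 k' i}" using all by simp
            also have "\<dots> \<longleftrightarrow> (a, i) \<in> Dl k'" using memD[of k' a i] k' by simp
            finally show "q \<in> Dl k \<longleftrightarrow> q \<in> Dl k'" using q by simp
          qed
          then show False using \<open>Dl k \<noteq> Dl k'\<close> by simp
        qed
        then obtain i where i: "{a1 k i, a2 k i} \<noteq> {a1 k' i, a2 k' i}" by blast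
        have kp: "k < p" and kp': "k' < p" using k k' by auto
        obtain a where a: "a \<in> {a1 k i, a2 k i}" "a \<notin> {a1 k' i, a2 k' i}"
          using two_diff[OF ne12[OF kp] ne12[OF kp'] i] by blast
        obtain b where b: "b \<in> {a1 k' i, a2 k' i}" "b \<notin> {a1 k i, a2 k i}"
          using two_diff[OF ne12[OF kp'] ne12[OF kp] i[symmetric]] by blast
        have aA: "a \<in> A i" using a(1) in1[OF kp] in2[OF kp] by auto
        have bA: "b \<in> A i" using b(1) in1[OF kp'] in2[OF kp'] by auto
        have "\<gamma> (a, i) * monom (xk k') a < \<gamma> (b, i) * monom (xk k') b"
          using xk[OF kp'] aA a(2) b(1) by auto
        moreover have "\<gamma> (b, i) * monom (xk k) b < \<gamma> (a, i) * monom (xk k) a"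
          using xk[OF kp] bA b(2) a(1) by auto
        ultimately show False using eq by simp
      qed
    qed
    show "\<exists>X. finite X \<and> card X = p \<and>
                     (\<forall>x\<in>X. (\<forall>k. x $ k > 0) \<and> cay_system A c \<gamma> x = 0 \<and>
                             nondegenerate (cay_system A c \<gamma>) x)"
      using xk injx by (intro exI[of _ "xk ` {..<p}"]) (auto simp: card_image)
  qed
qed

end
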